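(* Let $\tau$ be a distributive triangle function on $\Delta^+$, $\Sigma$ a ring of subsets of $\Omega\ne\emptyset$, $\gamma$ a $\tau$-decomposable measure on $\Sigma$ and $E\in\Sigma$. Let $f,g:\Omega\to[0,+\infty]$ be measurable functions that are $\gamma$-integrable on $E$. Then: (i) if $f\le g$, then $\int_E f\,d\gamma\ge\int_E g\,d\gamma$; (ii) for every $c\in[0,\infty)$, $\int_E c\cdot f\,d\gamma=c\odot\int_E f\,d\gamma$. (In particular these hold for simple functions.)
   Context: $\Delta^+$: functions $F:[-\infty,+\infty]\to[0,1]$ non-decreasing, left-continuous on $\mathbb{R}$, $F(x)=0$ for $x\le0$, $F(+\infty)=1$, ordered pointwise; $\varepsilon_0(x)=1$ if $x>0$, else $0$. Triangle function: symmetric, associative $\tau:\Delta^+\times\Delta^+\to\Delta^+$, non-decreasing in each variable, identity $\varepsilon_0$; $G\oplus H=\tau(G,H)$, $\bigoplus_{k=1}^nG_k=\tau(G_1,\bigoplus_{k=2}^nG_k)$. $c\odot G=\varepsilon_0$ if $c=0$, $(c\odot G)(x)=G(x/c)$ if $c>0$; $\tau$ distributive if $c\odot(G\oplus H)=(c\odot G)\oplus(c\odot H)$ for all $c\ge0$. $\tau$-decomposable measure: $\gamma:\Sigma\to\Delta^+$, $\gamma_\emptyset=\varepsilon_0$, $\gamma_{A\cup B}=\tau(\gamma_A,\gamma_B)$ for disjoint $A,B\in\Sigma$. Simple function $\sum_{i=1}^nx_i\chi_{E_i}$ ($x_i\in[0,\infty)$, $E_i\in\Sigma$ pairwise disjoint),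 $\int_Ef\,d\gamma=\bigoplus_ix_i\odot\gamma_{E\cap E_i}$. Measurable: pointwise limit of simple functions. $\mathcal S_{f,E}$: simple $\mathfrak f$ with $\mathfrak f(t)\le f(t)$ for $t\in E$. $f$ is $\gamma$-integrable on $E$ if some $H\in\Delta^+$ satisfies $\int_E\mathfrak f\,d\gamma\ge H$ for all $\mathfrak f\in\mathcal S_{f,E}$; then $\int_Ef\,d\gamma=\inf\{\int_E\mathfrak f\,d\gamma:\mathfrak f\in\mathcal S_{f,E}\}$, infimum in $(\Delta^+,\le)$ (left-continuous regularization of the pointwise infimum). *)

theory Defs
  imports "HOL-Analysis.Analysis"
begin

definition Delta_plus :: "(ereal \<Rightarrow> real) set" where
  "Delta_plus = {F. (\<forall>x. 0 \<le> F x \<and> F x \<le> 1) \<and> mono F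
     \<and> (\<forall>x::real. ((\<lambda>y. F (ereal y)) \<longlongrightarrow> F (ereal x)) (at_left x))
     \<and> (\<forall>x. x \<le> 0 \<longrightarrow> F x = 0) \<and> F \<infinity> = 1}"

definition eps0 :: "ereal \<Rightarrow> real" where
  "eps0 x = (if x > 0 then 1 else 0)"

definition triangle_function ::
  "((ereal \<Rightarrow> real) \<Rightarrow> (ereal \<Rightarrow> real) \<Rightarrow> (ereal \<Rightarrow> real)) \<Rightarrow> bool" where
  "triangle_function \<tau> \<longleftrightarrow>
     (\<forall>G\<in>Delta_plus. \<forall>H\<in>Delta_plus. \<tau> G H \<in> Delta_plus)
   \<and> (\<forall>G\<in>Delta_plus. \<forall>H\<in>Delta_plus. \<tau> G H = \<tau> H G)
   \<and> (\<forall>G\<in>Delta_plus. \<forall>H\<in>Delta_plus. \<forall>K\<in>Delta_plus. \<tau> G (\<tau> H K) = \<tau> (\<tau> G H) K)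
   \<and> (\<forall>G\<in>Delta_plus. \<forall>G'\<in>Delta_plus. \<forall>H\<in>Delta_plus. G \<le> G' \<longrightarrow> \<tau> G H \<le> \<tau> G' H)
   \<and> (\<forall>G\<in>Delta_plus. \<tau> G eps0 = G)"

text \<open>Scalar multiplication c \<odot> G (meant for c \<ge> 0).\<close>
definition smult_dist :: "real \<Rightarrow> (ereal \<Rightarrow> real) \<Rightarrow> (ereal \<Rightarrow> real)" where
  "smult_dist c G = (if c = 0 then eps0 else (\<lambda>x. G (x / ereal c)))"

definition distributive_tf ::
  "((ereal \<Rightarrow> real) \<Rightarrow> (ereal \<Rightarrow> real) \<Rightarrow> (ereal \<Rightarrow> real)) \<Rightarrow> bool" where
  "distributive_tf \<tau> \<longleftrightarrow> (\<forall>c\<ge>0. \<forall>G\<in>Delta_plus. \<forall>H\<in>Delta_plus.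
      smult_dist c (\<tau> G H) = \<tau> (smult_dist c G) (smult_dist c H))"

definition decomposable_measure ::
  "((ereal \<Rightarrow> real) \<Rightarrow> (ereal \<Rightarrow> real) \<Rightarrow> (ereal \<Rightarrow> real)) \<Rightarrow> 'a set set
     \<Rightarrow> ('a set \<Rightarrow> (ereal \<Rightarrow> real)) \<Rightarrow> bool" where
  "decomposable_measure \<tau> \<Sigma> \<gamma> \<longleftrightarrow>
     (\<forall>A\<in>\<Sigma>. \<gamma> A \<in> Delta_plus) \<and> \<gamma> {} = eps0
   \<and> (\<forall>A\<in>\<Sigma>. \<forall>B\<in>\<Sigma>. A \<inter> B = {} \<longrightarrow> \<gamma> (A \<union> B) = \<tau> (\<gamma> A) (\<gamma> B))"

definition simple_rep :: "'a set set \<Rightarrow> (real \<times> 'a set) list \<Rightarrow> bool" where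
  "simple_rep \<Sigma> rs \<longleftrightarrow> (\<forall>i<length rs. fst (rs!i) \<ge> 0 \<and> snd (rs!i) \<in> \<Sigma>)
     \<and> (\<forall>i<length rs. \<forall>j<length rs. i \<noteq> j \<longrightarrow> snd (rs!i) \<inter> snd (rs!j) = {})"

definition simple_fun_of :: "(real \<times> 'a set) list \<Rightarrow> 'a \<Rightarrow> ennreal" where
  "simple_fun_of rs t = (\<Sum>i<length rs. ennreal (fst (rs!i)) * indicator (snd (rs!i)) t)"

text \<open>Integral of a simple function given by a representation:
  \<oplus>_i x_i \<odot> \<gamma>_{E \<inter> E_i}, with \<oplus> of G_1..G_n = \<tau>(G_1, \<oplus> G_2..G_n).\<close>
definition simple_integral_rep ::
  "((ereal \<Rightarrow> real) \<Rightarrow> (ereal \<Rightarrow> real) \<Rightarrow> (ereal \<Rightarrow> real)) \<Rightarrow> ('a set \<Rightarrow> (ereal \<Rightarrow> real))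
     \<Rightarrow> 'a set \<Rightarrow> (real \<times> 'a set) list \<Rightarrow> (ereal \<Rightarrow> real)" where
  "simple_integral_rep \<tau> \<gamma> E rs =
     foldr \<tau> (map (\<lambda>(x, A). smult_dist x (\<gamma> (E \<inter> A))) rs) eps0"

definition is_simple :: "'a set \<Rightarrow> 'a set set \<Rightarrow> ('a \<Rightarrow> ennreal) \<Rightarrow> bool" where
  "is_simple \<Omega> \<Sigma> f \<longleftrightarrow> (\<exists>rs. simple_rep \<Sigma> rs \<and> (\<forall>t\<in>\<Omega>. f t = simple_fun_of rs t))"

definition measurable_fun :: "'a set \<Rightarrow> 'a set set \<Rightarrow> ('a \<Rightarrow> ennreal) \<Rightarrow> bool" where
  "measurable_fun \<Omega> \<Sigma> f \<longleftrightarrow> (\<exists>s :: nat \<Rightarrow> 'a \<Rightarrow> ennreal. (\<forall>n. is_simple \<Omega> \<Sigma> (s n))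
       \<and> (\<forall>t\<in>\<Omega>. (\<lambda>n. s n t) \<longlonglongrightarrow> f t))"

definition S_set :: "'a set set \<Rightarrow> ('a \<Rightarrow> ennreal) \<Rightarrow> 'a set \<Rightarrow> (real \<times> 'a set) list set" where
  "S_set \<Sigma> f E = {rs. simple_rep \<Sigma> rs \<and> (\<forall>t\<in>E. simple_fun_of rs t \<le> f t)}"

definition gamma_integrable ::
  "((ereal \<Rightarrow> real) \<Rightarrow> (ereal \<Rightarrow> real) \<Rightarrow> (ereal \<Rightarrow> real)) \<Rightarrow> 'a set set \<Rightarrow> ('a set \<Rightarrow> (ereal \<Rightarrow> real))
     \<Rightarrow> ('a \<Rightarrow> ennreal) \<Rightarrow> 'a set \<Rightarrow> bool" where
  "gamma_integrable \<tau> \<Sigma> \<gamma> f E \<longleftrightarrow>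
     (\<exists>H\<in>Delta_plus. \<forall>rs\<in>S_set \<Sigma> f E. H \<le> simple_integral_rep \<tau> \<gamma> E rs)"

text \<open>Infimum in (Delta-plus, \<le>): left-continuous regularisation of the pointwise infimum.\<close>
definition Inf_Delta :: "(ereal \<Rightarrow> real) set \<Rightarrow> (ereal \<Rightarrow> real)" where
  "Inf_Delta S x = (if x = \<infinity> then 1 else if x = -\<infinity> then 0 else
      (SUP y\<in>{y::real. ereal y < x}. Inf ((\<lambda>G. G (ereal y)) ` S)))"

definition gamma_integral ::
  "((ereal \<Rightarrow> real) \<Rightarrow> (ereal \<Rightarrow> real) \<Rightarrow> (ereal \<Rightarrow> real)) \<Rightarrow> 'a set set \<Rightarrow> ('a set \<Rightarrow> (ereal \<Rightarrow> real))
     \<Rightarrow> ('a \<Rightarrow> ennreal) \<Rightarrow> 'a set \<Rightarrow> (ereal \<Rightarrow> real)" where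
  "gamma_integral \<tau> \<Sigma> \<gamma> f E = Inf_Delta (simple_integral_rep \<tau> \<gamma> E ` S_set \<Sigma> f E)"

end

theory Submission
  imports Defs
begin

lemma ring_Int: "ring_of_sets \<Omega> \<Sigma> \<Longrightarrow> A \<in> \<Sigma> \<Longrightarrow> B \<in> \<Sigma> \<Longrightarrow> A \<inter> B \<in> \<Sigma>"
  by (meson ring_of_sets.axioms(1) semiring_of_sets.Int)

lemma ring_sub: "ring_of_sets \<Omega> \<Sigma> \<Longrightarrow> A \<in> \<Sigma> \<Longrightarrow> A \<subseteq> \<Omega>"
  by (meson ring_of_sets.axioms(1) semiring_of_sets_def subset_class.sets_into_space)

lemma filterlim_div_left:
  "(c::real)>0 \<Longrightarrow> filterlim (\<lambda>y. y/c) (at_left (x/c)) (at_left x)"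
  unfolding filterlim_at
  apply (intro conjI)
   apply (simp add: eventually_at_filter divide_strict_right_mono)
  apply (intro tendsto_intros)
  apply simp
  done

lemma eps0_Delta: "eps0 \<in> Delta_plus"
proof -
  have lc: "((\<lambda>y. eps0 (ereal y)) \<longlongrightarrow> eps0 (ereal x)) (at_left x)" for x :: real
  proof (cases "x > 0")
    case True
    have "eventually (\<lambda>y. eps0 (ereal y) = eps0 (ereal x)) (at_left x)"
      using True eventually_at_left_real[of 0 x]
      by (auto elim!: eventually_mono simp: eps0_def)
    then show ?thesis by (rule tendsto_eventually)
  next
    case False
    have "eventually (\<lambda>y. eps0 (ereal y) = eps0 (ereal x)) (at_left x)"
      using False by (auto simp: eventually_at_filter eps0_def)
    then show ?thesis by (rule tendsto_eventually)
  qed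
  have "mono eps0" by (auto simp: mono_def eps0_def)
  then show ?thesis using lc unfolding Delta_plus_def by (auto simp: eps0_def)
qed

lemma ediv_gt0: "(c::real) > 0 \<Longrightarrow> (y / ereal c > 0) = (y > 0)"
  by (cases y) (auto simp: divide_pos_pos zero_less_divide_iff)

lemma smult_eps0: "(c::real) \<ge> 0 \<Longrightarrow> smult_dist c eps0 = eps0"
  by (auto simp: smult_dist_def eps0_def fun_eq_iff ediv_gt0)

lemma smult_smult: "(c::real) > 0 \<Longrightarrow> x \<ge> 0 \<Longrightarrow> smult_dist c (smult_dist x G) = smult_dist (c*x) G"
proof (cases "x = 0")
  case True
  assume "c > 0"
  have "smult_dist 0 G = eps0" by (simp add: smult_dist_def)
  then show ?thesis using True \<open>c > 0\<close> smult_eps0[of c] by simp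
next
  case False
  assume c: "c > 0" "x \<ge> 0"
  then have x: "x > 0" using False by simp
  have "y / ereal c / ereal x = y / ereal (c*x)" for y
    using c x by (cases y) auto
  then show ?thesis using c x False by (simp add: smult_dist_def)
qed

lemma smult_Delta:
  assumes "(c::real) \<ge> 0" "G \<in> Delta_plus"
  shows "smult_dist c G \<in> Delta_plus"
proof (cases "c = 0")
  case True then show ?thesis by (simp add: smult_dist_def eps0_Delta)
next
  case False
  then have c: "c > 0" using assms by simp
  have G: "\<forall>x. 0 \<le> G x \<and> G x \<le> 1" "mono G"
    "\<forall>x::real. ((\<lambda>y. G (ereal y)) \<longlongrightarrow> G (ereal x)) (at_left x)"
    "\<forall>x. x \<le> 0 \<longrightarrow> G x = 0" "G \<infinity> = 1" using assms(2) unfolding Delta_plus_def by auto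
  have sm: "smult_dist c G = (\<lambda>x. G (x / ereal c))" using False by (simp add: smult_dist_def)
  have m: "mono (\<lambda>x. G (x / ereal c))"
    using G(2) c by (auto simp: mono_def ereal_divide_right_mono)
  have lc: "((\<lambda>y. G (ereal y / ereal c)) \<longlongrightarrow> G (ereal x / ereal c)) (at_left x)" for x :: real
  proof -
    have "((\<lambda>y. G (ereal (y / c))) \<longlongrightarrow> G (ereal (x / c))) (at_left x)"
      using filterlim_compose[OF G(3)[rule_format, of "x/c"] filterlim_div_left[OF c, of x]] .
    then show ?thesis using c by simp
  qed
  have z: "x \<le> 0 \<Longrightarrow> x / ereal c \<le> 0" for x :: ereal
    using c by (cases x) (auto simp: divide_nonpos_pos)
  show ?thesis unfolding sm Delta_plus_def using G c m lc z by auto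
qed

lemma simple_rep_set:
  "simple_rep \<Sigma> rs \<Longrightarrow> \<forall>(x,A)\<in>set rs. x \<ge> 0 \<and> A \<in> \<Sigma>"
  unfolding simple_rep_def by (auto simp: in_set_conv_nth) (metis fst_conv, metis snd_conv)

lemma sir_Delta:
  assumes tf: "triangle_function \<tau>" and dm: "decomposable_measure \<tau> \<Sigma> \<gamma>"
    and r: "ring_of_sets \<Omega> \<Sigma>" and E: "E \<in> \<Sigma>"
  shows "\<forall>(x,A)\<in>set rs. x \<ge> 0 \<and> A \<in> \<Sigma> \<Longrightarrow> simple_integral_rep \<tau> \<gamma> E rs \<in> Delta_plus"
proof (induction rs)
  case Nil then show ?case by (simp add: simple_integral_rep_def eps0_Delta)
next
  case (Cons a rs)
  obtain x A where a: "a = (x, A)" by fastforce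
  have "E \<inter> A \<in> \<Sigma>" using Cons.prems a E ring_Int[OF r] by auto
  then have g: "\<gamma> (E \<inter> A) \<in> Delta_plus" using dm by (simp add: decomposable_measure_def)
  have "smult_dist x (\<gamma> (E \<inter> A)) \<in> Delta_plus" using smult_Delta g Cons.prems a by auto
  moreover have "simple_integral_rep \<tau> \<gamma> E rs \<in> Delta_plus" using Cons by auto
  ultimately show ?case using tf a
    by (simp add: simple_integral_rep_def triangle_function_def)
qed

lemma sir_scale:
  assumes tf: "triangle_function \<tau>" and dt: "distributive_tf \<tau>" and dm: "decomposable_measure \<tau> \<Sigma> \<gamma>"
    and r: "ring_of_sets \<Omega> \<Sigma>" and E: "E \<in> \<Sigma>" and c: "c > 0"
  shows "\<forall>(x,A)\<in>set rs. x \<ge> 0 \<and> A \<in> \<Sigma> \<Longrightarrow>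
    simple_integral_rep \<tau> \<gamma> E (map (\<lambda>(x,A). (c*x, A)) rs) = smult_dist c (simple_integral_rep \<tau> \<gamma> E rs)"
proof (induction rs)
  case Nil then show ?case using c by (simp add: simple_integral_rep_def smult_eps0)
next
  case (Cons a rs)
  obtain x A where a: "a = (x, A)" by fastforce
  have "E \<inter> A \<in> \<Sigma>" using Cons.prems a E ring_Int[OF r] by auto
  then have g: "\<gamma> (E \<inter> A) \<in> Delta_plus" using dm by (simp add: decomposable_measure_def)
  have d1: "smult_dist x (\<gamma> (E \<inter> A)) \<in> Delta_plus" using smult_Delta g Cons.prems a by auto
  have d2: "simple_integral_rep \<tau> \<gamma> E rs \<in> Delta_plus" using Cons.prems sir_Delta[OF tf dm r E] by auto
  have x: "x \<ge> 0" using Cons.prems a by auto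
  have IH: "simple_integral_rep \<tau> \<gamma> E (map (\<lambda>(x,A). (c*x, A)) rs) = smult_dist c (simple_integral_rep \<tau> \<gamma> E rs)"
    using Cons by auto
  have "smult_dist c (simple_integral_rep \<tau> \<gamma> E (a # rs))
      = smult_dist c (\<tau> (smult_dist x (\<gamma> (E \<inter> A))) (simple_integral_rep \<tau> \<gamma> E rs))"
    by (simp add: a simple_integral_rep_def)
  also have "\<dots> = \<tau> (smult_dist c (smult_dist x (\<gamma> (E \<inter> A)))) (smult_dist c (simple_integral_rep \<tau> \<gamma> E rs))"
    using dt d1 d2 c unfolding distributive_tf_def by auto
  also have "\<dots> = \<tau> (smult_dist (c*x) (\<gamma> (E \<inter> A))) (simple_integral_rep \<tau> \<gamma> E (map (\<lambda>(x,A). (c*x, A)) rs))"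
    using smult_smult[OF c x] IH by simp
  also have "\<dots> = simple_integral_rep \<tau> \<gamma> E (map (\<lambda>(x,A). (c*x, A)) (a # rs))"
    by (simp add: a simple_integral_rep_def)
  finally show ?case by simp
qed

lemma Inf_Delta_scale:
  assumes c: "(c::real) > 0"
  shows "Inf_Delta (smult_dist c ` S) = smult_dist c (Inf_Delta S)"
proof
  fix x :: ereal
  show "Inf_Delta (smult_dist c ` S) x = smult_dist c (Inf_Delta S) x"
  proof (cases x)
    case (real r)
    have set: "{y::real. ereal y < ereal (r/c)} = (\<lambda>y. y/c) ` {y. ereal y < ereal r}"
    proof safe
      fix y assume "ereal y < ereal (r/c)"
      then have "y*c < r" using c by (simp add: pos_less_divide_eq)
      then show "y \<in> (\<lambda>y. y/c) ` {y. ereal y < ereal r}" using c by (intro image_eqI[of _ _ "y*c"]) auto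
    qed (use c in \<open>auto simp: divide_strict_right_mono\<close>)
    have "Inf_Delta (smult_dist c ` S) x
        = (SUP y\<in>{y. ereal y < ereal r}. Inf ((\<lambda>G. G (ereal (y/c))) ` S))"
      using c real by (simp add: Inf_Delta_def smult_dist_def image_image)
    also have "\<dots> = (SUP y\<in>{y::real. ereal y < ereal (r/c)}. Inf ((\<lambda>G. G (ereal y)) ` S))"
      unfolding set image_image by simp
    also have "\<dots> = smult_dist c (Inf_Delta S) x"
      using c real by (simp add: Inf_Delta_def smult_dist_def)
    finally show ?thesis .
  qed (use c in \<open>auto simp: Inf_Delta_def smult_dist_def\<close>)
qed

lemma Inf_Delta_single_eps0: "Inf_Delta {eps0} = eps0"
proof
  fix x :: ereal
  show "Inf_Delta {eps0} x = eps0 x"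
  proof (cases x)
    case (real r)
    show ?thesis
    proof (cases "r > 0")
      case True
      have "(SUP y\<in>{y::real. ereal y < ereal r}. eps0 (ereal y)) = 1"
        unfolding image_def
        apply (rule cSup_eq_maximum)
        using True by (auto simp: eps0_def intro!: exI[of _ "r/2"])
      then show ?thesis using real True by (simp add: Inf_Delta_def) (simp add: eps0_def)
    next
      case False
      have "(SUP y\<in>{y::real. ereal y < ereal r}. eps0 (ereal y)) = 0"
        unfolding image_def
        apply (rule cSup_eq_maximum)
        using False by (auto simp: eps0_def intro!: exI[of _ "r - 1"])
      then show ?thesis using real False by (simp add: Inf_Delta_def) (simp add: eps0_def)
    qed
  qed (auto simp: Inf_Delta_def eps0_def)
qed

lemma sir_zero:
  assumes tf: "triangle_function \<tau>"
  shows "\<forall>(x,A)\<in>set rs. smult_dist x (\<gamma> (E \<inter> A)) = eps0 \<Longrightarrow> simple_integral_rep \<tau> \<gamma> E rs = eps0"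
proof (induction rs)
  case Nil then show ?case by (simp add: simple_integral_rep_def)
next
  case (Cons a rs)
  have "\<tau> eps0 eps0 = eps0" using tf eps0_Delta by (simp add: triangle_function_def)
  then show ?case using Cons by (cases a) (simp add: simple_integral_rep_def)
qed

theorem theorem4p7:
  fixes \<tau> :: "(ereal \<Rightarrow> real) \<Rightarrow> (ereal \<Rightarrow> real) \<Rightarrow> (ereal \<Rightarrow> real)"
    and \<Omega> :: "'a set" and \<Sigma> :: "'a set set" and \<gamma> :: "'a set \<Rightarrow> (ereal \<Rightarrow> real)"
    and E :: "'a set" and f g :: "'a \<Rightarrow> ennreal"
  assumes "triangle_function \<tau>" and "distributive_tf \<tau>"
    and "\<Omega> \<noteq> {}" and "ring_of_sets \<Omega> \<Sigma>"
    and "decomposable_measure \<tau> \<Sigma> \<gamma>" and "E \<in> \<Sigma>"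
    and "measurable_fun \<Omega> \<Sigma> f" and "measurable_fun \<Omega> \<Sigma> g"
    and "gamma_integrable \<tau> \<Sigma> \<gamma> f E" and "gamma_integrable \<tau> \<Sigma> \<gamma> g E"
  shows "((\<forall>t\<in>\<Omega>. f t \<le> g t) \<longrightarrow> gamma_integral \<tau> \<Sigma> \<gamma> g E \<le> gamma_integral \<tau> \<Sigma> \<gamma> f E)
       \<and> (\<forall>c::real. c \<ge> 0 \<longrightarrow>
            gamma_integrable \<tau> \<Sigma> \<gamma> (\<lambda>t. ennreal c * f t) E
          \<and> gamma_integral \<tau> \<Sigma> \<gamma> (\<lambda>t. ennreal c * f t) E = smult_dist c (gamma_integral \<tau> \<Sigma> \<gamma> f E))"
proof -
  note tf = assms(1) and dt = assms(2) and r = assms(4) and dm = assms(5) and E = assms(6)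
  let ?sir = "simple_integral_rep \<tau> \<gamma> E"
  have nil: "[] \<in> S_set \<Sigma> h E" for h
    by (simp add: S_set_def simple_rep_def simple_fun_of_def)
  have sir_nil: "?sir [] = eps0" by (simp add: simple_integral_rep_def)
  have EO: "E \<subseteq> \<Omega>" using ring_sub[OF r E] .
  have part1: "gamma_integral \<tau> \<Sigma> \<gamma> g E \<le> gamma_integral \<tau> \<Sigma> \<gamma> f E" if fg: "\<forall>t\<in>\<Omega>. f t \<le> g t"
  proof -
    have sub: "S_set \<Sigma> f E \<subseteq> S_set \<Sigma> g E"
      using fg EO unfolding S_set_def by (auto intro: order_trans)
    obtain H where H: "H \<in> Delta_plus" "\<forall>rs\<in>S_set \<Sigma> g E. H \<le> ?sir rs"
      using assms(10) unfolding gamma_integrable_def by blast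
    let ?SF = "?sir ` S_set \<Sigma> f E" and ?SG = "?sir ` S_set \<Sigma> g E"
    have e: "eps0 \<in> ?SF" using nil sir_nil by (metis image_eqI)
    have SS: "?SF \<subseteq> ?SG" using sub by auto
    have bb: "bdd_below ((\<lambda>G. G (ereal y)) ` ?SG)" for y
      using H(2) unfolding bdd_below_def le_fun_def by blast
    have bbF: "bdd_below ((\<lambda>G. G (ereal y)) ` ?SF)" for y
      using bb[of y] SS by (meson bdd_below_mono image_mono)
    have up: "Inf ((\<lambda>G. G (ereal y)) ` ?SF) \<le> 1" for y
    proof -
      have "Inf ((\<lambda>G. G (ereal y)) ` ?SF) \<le> eps0 (ereal y)"
        using e bbF[of y] by (intro cInf_lower) auto
      then show ?thesis by (simp add: eps0_def split: if_splits)
    qed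
    show ?thesis
    proof (rule le_funI)
      fix x :: ereal
      show "gamma_integral \<tau> \<Sigma> \<gamma> g E x \<le> gamma_integral \<tau> \<Sigma> \<gamma> f E x"
      proof (cases x)
        case (real rr)
        have "(SUP y\<in>{y. ereal y < x}. Inf ((\<lambda>G. G (ereal y)) ` ?SG))
            \<le> (SUP y\<in>{y. ereal y < x}. Inf ((\<lambda>G. G (ereal y)) ` ?SF))"
        proof (rule cSUP_mono)
          show "{y. ereal y < x} \<noteq> {}" using real by (auto intro!: exI[of _ "rr - 1"])
          show "bdd_above ((\<lambda>y. Inf ((\<lambda>G. G (ereal y)) ` ?SF)) ` {y. ereal y < x})"
            using up by (auto simp: bdd_above_def)
          fix n assume "n \<in> {y. ereal y < x}"
          then show "\<exists>m\<in>{y. ereal y < x}. Inf ((\<lambda>G. G (ereal n)) ` ?SG) \<le> Inf ((\<lambda>G. G (ereal m)) ` ?SF)"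
            using e SS bb[of n] by (intro bexI[of _ n] cInf_superset_mono) auto
        qed
        then show ?thesis using real by (simp add: gamma_integral_def Inf_Delta_def)
      qed (auto simp: gamma_integral_def Inf_Delta_def)
    qed
  qed
  have part2: "gamma_integrable \<tau> \<Sigma> \<gamma> (\<lambda>t. ennreal c * f t) E
          \<and> gamma_integral \<tau> \<Sigma> \<gamma> (\<lambda>t. ennreal c * f t) E = smult_dist c (gamma_integral \<tau> \<Sigma> \<gamma> f E)"
    if c0: "c \<ge> 0" for c :: real
  proof (cases "c = 0")
    case True
    have all: "?sir rs = eps0" if rs: "rs \<in> S_set \<Sigma> (\<lambda>t. ennreal c * f t) E" for rs
    proof (rule sir_zero[OF tf], safe)
      fix x A assume xA: "(x, A) \<in> set rs"
      then obtain i where i: "i < length rs" "rs ! i = (x, A)" by (auto simp: in_set_conv_nth)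
      have rep: "simple_rep \<Sigma> rs" and le: "\<forall>t\<in>E. simple_fun_of rs t \<le> 0"
        using rs True by (auto simp: S_set_def)
      have x0: "x \<ge> 0" using rep i unfolding simple_rep_def by (metis fst_conv)
      show "smult_dist x (\<gamma> (E \<inter> A)) = eps0"
      proof (cases "x = 0")
        case True then show ?thesis by (simp add: smult_dist_def)
      next
        case False
        have "E \<inter> A = {}"
        proof (rule ccontr)
          assume "E \<inter> A \<noteq> {}"
          then obtain t where t: "t \<in> E" "t \<in> A" by auto
          have "ennreal (fst (rs!i)) * indicator (snd (rs!i)) t \<le> simple_fun_of rs t"
            unfolding simple_fun_of_def using i by (intro member_le_sum) auto
          then have "ennreal x \<le> 0" using i t le by (auto intro: order_trans)
          then show False using False x0 by simp
        qed
        then show ?thesis using dm x0 smult_eps0[of x] by (simp add: decomposable_measure_def)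
      qed
    qed
    have img: "?sir ` S_set \<Sigma> (\<lambda>t. ennreal c * f t) E = {eps0}"
    proof
      show "?sir ` S_set \<Sigma> (\<lambda>t. ennreal c * f t) E \<subseteq> {eps0}" using all by blast
      show "{eps0} \<subseteq> ?sir ` S_set \<Sigma> (\<lambda>t. ennreal c * f t) E"
        using nil[of "\<lambda>t. ennreal c * f t"] sir_nil by (metis empty_subsetI image_eqI insert_subset)
    qed
    show ?thesis
      unfolding gamma_integrable_def gamma_integral_def img Inf_Delta_single_eps0
      using True eps0_Delta all by (auto simp: smult_dist_def)
  next
    case False
    then have c: "c > 0" using c0 by simp
    let ?sc = "map (\<lambda>(x, A). (c * x, A))"
    have sf: "simple_fun_of (?sc rs) t = ennreal c * simple_fun_of rs t" for rs t
      unfolding simple_fun_of_def sum_distrib_left using c0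
      by (intro sum.cong) (auto simp: ennreal_mult' case_prod_unfold mult.assoc)
    have rep: "simple_rep \<Sigma> (?sc rs) = simple_rep \<Sigma> rs" for rs
      unfolding simple_rep_def using c
      by (simp add: case_prod_unfold zero_le_mult_iff)
    have cne: "ennreal c \<noteq> 0" "ennreal c \<noteq> top" using c by auto
    have Sc: "S_set \<Sigma> (\<lambda>t. ennreal c * f t) E = ?sc ` S_set \<Sigma> f E"
    proof safe
      fix rs assume rs: "rs \<in> S_set \<Sigma> (\<lambda>t. ennreal c * f t) E"
      let ?rs = "map (\<lambda>(x, A). (x / c, A)) rs"
      have eq: "?sc ?rs = rs" using c by (induction rs) auto
      have "simple_rep \<Sigma> ?rs" using rs rep[of ?rs] eq by (simp add: S_set_def)
      moreover have "\<forall>t\<in>E. simple_fun_of ?rs t \<le> f t"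
        using rs sf[of ?rs] eq cne by (auto simp: S_set_def ennreal_mult_le_mult_iff)
      ultimately show "rs \<in> ?sc ` S_set \<Sigma> f E"
        using eq by (intro image_eqI[of _ _ ?rs]) (auto simp: S_set_def)
    next
      fix rs assume "rs \<in> S_set \<Sigma> f E"
      then have "simple_rep \<Sigma> rs" "\<forall>t\<in>E. simple_fun_of rs t \<le> f t" by (auto simp: S_set_def)
      moreover have "\<forall>t\<in>E. simple_fun_of (?sc rs) t \<le> ennreal c * f t"
        using calculation(2) unfolding sf by (auto intro: mult_left_mono)
      ultimately show "?sc rs \<in> S_set \<Sigma> (\<lambda>t. ennreal c * f t) E"
        using rep[of rs] unfolding S_set_def by blast
    qed
    have sirsc: "?sir (?sc rs) = smult_dist c (?sir rs)" if "rs \<in> S_set \<Sigma> f E" for rs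
    proof -
      have "simple_rep \<Sigma> rs" using that by (simp add: S_set_def)
      then show ?thesis by (rule sir_scale[OF tf dt dm r E c simple_rep_set])
    qed
    have img: "?sir ` S_set \<Sigma> (\<lambda>t. ennreal c * f t) E = smult_dist c ` ?sir ` S_set \<Sigma> f E"
      unfolding Sc image_image using sirsc by (auto simp: image_iff)
    obtain H where H: "H \<in> Delta_plus" "\<forall>rs\<in>S_set \<Sigma> f E. H \<le> ?sir rs"
      using assms(9) unfolding gamma_integrable_def by blast
    have "smult_dist c H \<in> Delta_plus" using smult_Delta[OF c0 H(1)] .
    moreover have "smult_dist c H \<le> ?sir rs" if "rs \<in> S_set \<Sigma> (\<lambda>t. ennreal c * f t) E" for rs
      using that H(2) sirsc unfolding Sc using False by (auto simp: smult_dist_def le_fun_def)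
    ultimately have "gamma_integrable \<tau> \<Sigma> \<gamma> (\<lambda>t. ennreal c * f t) E"
      unfolding gamma_integrable_def by blast
    then show ?thesis unfolding gamma_integral_def img Inf_Delta_scale[OF c] by simp
  qed
  show ?thesis using part1 part2 by blast
qed

end
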